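(* Let $q=p^m$ with $p$ an odd prime and $m\ge 1$, let $f(x)=x^{q+2}$ on $\mathbb{F}_{q^2}$, and for $b\in\mathbb{F}_{q^2}$ let $\delta(b)=\#\{u\in\mathbb{F}_{q^2}:\ 2u^{q+1}+u^2=b\}$ (equivalently $\delta(b)=\delta_f(1,b+\tfrac14)$). Then for every $b\in\mathbb{F}_{q^2}^*$, $\delta(b)$ is even and $\delta(b)\le 4$.
   Context: $\delta_f(a,b)=\#\{x\in\mathbb{F}_{q^2}:\ f(x+a)-f(x)=b\}$. *)

theory Defs
  imports Main "HOL-Computational_Algebra.Primes"
begin

text \<open>For the field F_{q^2} (modelled as a finite field type 'a with CARD('a) = q^2),
  delta q b = number of u with 2 u^(q+1) + u^2 = b.\<close>
definition delta :: "nat \<Rightarrow> 'a::{field,finite} \<Rightarrow> nat" where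
  "delta q b = card {u :: 'a. 2 * u ^ (q + 1) + u ^ 2 = b}"

end

theory Submission
  imports Defs "HOL-Number_Theory.Residues"
begin

lemma pow_card_same:
  fixes x :: "'a :: {field,finite}"
  shows "x ^ card (UNIV :: 'a set) = x"
proof (cases "x = 0")
  case False
  have "x * (\<Prod>y\<in>UNIV-{0}. x * y) = x * x ^ (card (UNIV :: 'a set) - 1) * \<Prod>(UNIV-{0})"
    by (simp add: prod.distrib mult_ac)
  also have "x * x ^ (card (UNIV :: 'a set) - 1) = x ^ Suc (card (UNIV :: 'a set) - 1)"
    by (subst power_Suc) auto
  also have "Suc (card (UNIV :: 'a set) - 1) = card (UNIV :: 'a set)"
    using finite_UNIV_card_ge_0[where ?'a = 'a] by simp
  also have "(\<Prod>y\<in>UNIV-{0}. x * y) = (\<Prod>y\<in>UNIV-{0}. y)"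
    by (rule prod.reindex_bij_witness[of _ "\<lambda>y. y / x" "\<lambda>y. x * y"]) (use False in auto)
  finally show ?thesis
    by simp
qed (use finite_UNIV_card_ge_0[where ?'a = 'a] in auto)

lemma sq_roots:
  fixes c :: "'a :: field"
  shows "\<exists>v. {u. u ^ 2 = c} \<subseteq> {v, -v}"
proof (cases "\<exists>v. v ^ 2 = c")
  case True
  then obtain v where v: "v ^ 2 = c" by blast
  have "{u. u ^ 2 = c} \<subseteq> {v, -v}"
  proof
    fix u assume "u \<in> {u. u ^ 2 = c}"
    hence "(u - v) * (u + v) = 0" using v by (simp add: algebra_simps power2_eq_square)
    thus "u \<in> {v, -v}" by (auto simp: add_eq_0_iff2)
  qed
  thus ?thesis by blast
qed auto

lemma quad_roots:
  fixes A B C :: "'a :: field"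
  assumes "C \<noteq> 0"
  shows "\<exists>x y. {N. A * N^2 + B * N + C = 0} \<subseteq> {x, y}"
proof (cases "\<exists>x. A * x^2 + B * x + C = 0")
  case False thus ?thesis by auto
next
  case True
  then obtain x where x: "A * x^2 + B * x + C = 0" by blast
  show ?thesis
  proof (cases "\<exists>y. y \<noteq> x \<and> A * y^2 + B * y + C = 0")
    case False thus ?thesis by blast
  next
    case True
    then obtain y where y: "y \<noteq> x" "A * y^2 + B * y + C = 0" by blast
    have "{N. A * N^2 + B * N + C = 0} \<subseteq> {x, y}"
    proof
      fix z assume z: "z \<in> {N. A * N^2 + B * N + C = 0}"
      show "z \<in> {x, y}"
      proof (rule ccontr)
        assume "z \<notin> {x, y}"
        hence d: "z \<noteq> x" "z \<noteq> y" by auto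
        have "(x - y) * (A * (x + y) + B) = (A * x^2 + B * x + C) - (A * y^2 + B * y + C)"
          by (simp add: algebra_simps power2_eq_square)
        also have "... = 0" using x y(2) by simp
        finally have e1: "(x - y) * (A * (x + y) + B) = 0" .
        have "(x - z) * (A * (x + z) + B) = (A * x^2 + B * x + C) - (A * z^2 + B * z + C)"
          by (simp add: algebra_simps power2_eq_square)
        also have "... = 0" using x z by simp
        finally have e2: "(x - z) * (A * (x + z) + B) = 0" .
        have f1: "A * (x + y) + B = 0" using e1 y(1) by simp
        have f2: "A * (x + z) + B = 0" using e2 d by simp
        have "A * (y - z) = (A * (x + y) + B) - (A * (x + z) + B)" by (simp add: algebra_simps)
        also have "... = 0" using f1 f2 by simp
        finally have "A * (y - z) = 0" .
        hence "A = 0" using d by simp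
        hence "B = 0" using f1 by simp
        thus False using x \<open>A = 0\<close> assms by simp
      qed
    qed
    thus ?thesis by blast
  qed
qed

theorem lemma8:
  fixes p m q :: nat and b :: "'a::{field,finite}"
  assumes "prime p" and "odd p" and "m \<ge> 1" and "q = p ^ m"
    and "card (UNIV :: 'a set) = q ^ 2"
    and "b \<noteq> 0"
  shows "even (delta q b) \<and> delta q b \<le> 4"
proof -
  have cpos: "CHAR('a) > 0" by (simp add: finite_imp_CHAR_pos)
  have cprime: "prime CHAR('a)" using prime_CHAR_semidom[OF cpos] .
  have "CHAR('a) dvd p ^ (m * 2)" using CHAR_dvd_CARD[where 'a='a] assms(4,5)
    by (simp add: power_mult)
  hence "CHAR('a) dvd p" using cprime prime_dvd_power by blast
  hence cp: "CHAR('a) = p" using cprime assms(1) by (simp add: primes_dvd_imp_eq)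
  have fr: "\<And>x y :: 'a. (x + y) ^ q = x ^ q + y ^ q"
    using freshmans_dream'[OF cprime, of q m] cp assms(4) by simp
  have oq: "odd q" using assms(2,4) by simp
  have two_nz: "(2::'a) \<noteq> 0"
  proof
    assume "(2::'a) = 0"
    hence "of_nat 2 = (0::'a)" by simp
    hence "p dvd 2" using cp of_nat_eq_0_iff_char_dvd by metis
    thus False using dvd_imp_le[of p 2] prime_ge_2_nat[OF assms(1)] assms(2)
      by (cases "p = 2") auto
  qed
  have two_q: "(2::'a) ^ q = 2" using fr[of 1 1] by simp
  have frc: "\<And>N. (b - 2 * N) ^ q = b ^ q - 2 * N ^ q"
  proof -
    fix N :: 'a
    have "(b - 2 * N) ^ q = b ^ q + (- (2 * N)) ^ q" using fr[of b "- (2*N)"] by simp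
    also have "(- (2 * N)) ^ q = - (2 ^ q * N ^ q)" using oq
      by (simp add: power_minus_odd power_mult_distrib)
    finally show "(b - 2 * N) ^ q = b ^ q - 2 * N ^ q" using two_q by simp
  qed
  have qq: "\<And>x::'a. x ^ (q * q) = x" using pow_card_same assms(5)
    by (metis power2_eq_square)
  define S where "S = {u :: 'a. 2 * u ^ (q + 1) + u ^ 2 = b}"
  have dS: "delta q b = card S" by (simp add: delta_def S_def)
  have fin: "finite S" by simp
  define R where "R = {N :: 'a. 3 * N^2 + (- 2 * (b + b ^ q)) * N + b ^ (q+1) = 0}"
  have bq: "b ^ (q+1) \<noteq> 0" using assms(6) by simp
  obtain x y where Rxy: "R \<subseteq> {x, y}" using quad_roots[OF bq, of 3 "- 2 * (b + b ^ q)"]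
    unfolding R_def by blast
  have cR: "card R \<le> 2"
    by (rule order.trans[OF card_mono[OF _ Rxy]]) (auto simp: card_insert_if)
  have SU: "S \<subseteq> (\<Union>N\<in>R. {u. u ^ 2 = b - 2 * N})"
  proof
    fix u assume "u \<in> S"
    hence u: "2 * u ^ (q + 1) + u ^ 2 = b" by (simp add: S_def)
    define N where "N = u ^ (q + 1)"
    have c: "u ^ 2 = b - 2 * N" using u by (simp add: N_def algebra_simps)
    have Nq: "N ^ q = N"
    proof -
      have "N ^ q = u ^ (q * q) * u ^ q" unfolding N_def
        by (simp add: power_mult[symmetric] power_add[symmetric] algebra_simps)
      thus ?thesis using qq by (simp add: N_def)
    qed
    have "N ^ 2 = (u ^ 2) ^ q * u ^ 2" unfolding N_def
      by (simp add: power_mult[symmetric] power_add[symmetric] algebra_simps)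
    also have "... = (b ^ q - 2 * N) * (b - 2 * N)" using c frc Nq by simp
    finally have "N ^ 2 = (b ^ q - 2 * N) * (b - 2 * N)" .
    hence "N \<in> R" unfolding R_def
      by (simp add: algebra_simps power2_eq_square power_add)
    thus "u \<in> (\<Union>N\<in>R. {u. u ^ 2 = b - 2 * N})" using c by blast
  qed
  have cf: "\<And>c::'a. card {u. u ^ 2 = c} \<le> 2"
  proof -
    fix c :: 'a
    obtain v where v: "{u. u ^ 2 = c} \<subseteq> {v, -v}" using sq_roots by blast
    have "card {u. u ^ 2 = c} \<le> card {v, -v}" by (rule card_mono) (use v in auto)
    also have "card {v, -v} \<le> 2" by (simp add: card_insert_if)
    finally show "card {u. u ^ 2 = c} \<le> 2" .
  qed
  have "card S \<le> card (\<Union>N\<in>R. {u. u ^ 2 = b - 2 * N})"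
    by (rule card_mono[OF _ SU]) simp
  also have "... \<le> (\<Sum>N\<in>R. card {u. u ^ 2 = b - 2 * N})"
    by (rule card_UN_le) simp
  also have "... \<le> (\<Sum>N\<in>R. 2)" by (rule sum_mono) (rule cf)
  also have "... \<le> 4" using cR by simp
  finally have le4: "card S \<le> 4" .
  define P where "P = (\<lambda>u. {u, -u}) ` S"
  have neg: "\<And>u. u \<in> S \<Longrightarrow> -u \<in> S"
  proof -
    fix u assume "u \<in> S"
    moreover have "(-u) ^ (q+1) = u ^ (q+1)" using oq by (simp add: power_minus_even)
    ultimately show "-u \<in> S" by (simp add: S_def)
  qed
  have nz: "\<And>u. u \<in> S \<Longrightarrow> u \<noteq> -u"
  proof -
    fix u assume uS: "u \<in> S"
    have "u \<noteq> 0" using uS assms(6) by (auto simp: S_def)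
    show "u \<noteq> -u"
    proof
      assume "u = -u"
      hence "2 * u = 0" by (metis add_eq_0_iff2 mult_2)
      thus False using two_nz \<open>u \<noteq> 0\<close> by simp
    qed
  qed
  have UP: "\<Union>P = S" using neg by (auto simp: P_def)
  have "2 * card P = card (\<Union>P)"
  proof (rule card_partition)
    show "finite P" by (simp add: P_def)
    show "finite (\<Union>P)" by (simp add: UP)
    show "\<And>c. c \<in> P \<Longrightarrow> card c = 2" using nz by (auto simp: P_def)
    show "\<And>c1 c2. c1 \<in> P \<Longrightarrow> c2 \<in> P \<Longrightarrow> c1 \<noteq> c2 \<Longrightarrow> c1 \<inter> c2 = {}"
      by (auto simp: P_def)
  qed
  hence "even (card S)" using UP by (metis dvd_triv_left)
  thus ?thesis using le4 dS by simp
qed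

end
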